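(* Let $\delta$ be an ordinal with $\mathrm{cf}(\omega^\delta)=\kappa\ge\omega$, and suppose $\omega^\delta=\sum_{\xi<\kappa}\omega^{\delta_\xi}$, where $\delta_\xi\le\delta_\zeta$ whenever $\xi<\zeta<\kappa$, and $\mathrm{cf}(\omega^{\delta_\xi})\ge\kappa$ for all $\xi<\kappa$. Then $\mathcal P_\kappa\hookrightarrow_c\mathrm{sq}\,\mathbb P(\omega^\delta)$.
   Context: $\mathbb P(\omega^\delta)$ is the poset of subsets of $\omega^\delta$ order-isomorphic to $\omega^\delta$, ordered by $\subset$; $\mathrm{sq}$ denotes separative quotient (antisymmetric quotient of the separative modification $p\le^*q\iff\forall r\le p\,\exists s\le r\, s\le q$). For a cardinal $\kappa$, $\mathcal P_\kappa=(P(\kappa)/[\kappa]^{<\kappa})^+$, the nonzero elements of the quotient of $P(\kappa)$ by the ideal of subsets of size $<\kappa$. A map $f:\mathbb P\to\mathbb Q$ between preorders is a complete embedding ($\hookrightarrow_c$) iff (1) $p_1\le p_2\Rightarrow f(p_1)\le f(p_2)$; (2) $p_1\perp p_2\iff f(p_1)\perp f(p_2)$; (3) for every $q\in\mathbb Q$ there is $p\in\mathbb P$ such that $f(p')$ is compatible with $q$ for all $p'\le p$. $\mathbb P\hookrightarrow_c\mathbb Q$ means such an $f$ exists. *)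

theory Defs
  imports Main
begin

(* Ordinals are represented as well-order relations (Well_order, from Main);
   ordinal comparison is ordLeq / ordLess / ordIso, cardinals are card_of,
   and a cardinal kappa is a Card_order (initial ordinal) k with Field k = kappa. *)

section \<open>Ordinal exponentiation omega^d (finite-support functions, Cantor normal form)\<close>

definition opow_carrier :: "'a rel \<Rightarrow> ('a \<Rightarrow> nat) set" where
  "opow_carrier d = {f. (\<forall>x. x \<notin> Field d \<longrightarrow> f x = 0) \<and> finite {x. f x \<noteq> 0}}"

definition opow :: "'a rel \<Rightarrow> ('a \<Rightarrow> nat) rel" where
  "opow d = {(f, g). f \<in> opow_carrier d \<and> g \<in> opow_carrier d \<and>
      (f = g \<or> (\<exists>x. f x < g x \<and> (\<forall>y. f y \<noteq> g y \<longrightarrow> (y, x) \<in> d)))}"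

definition osum :: "'k rel \<Rightarrow> ('k \<Rightarrow> 'b rel) \<Rightarrow> ('k \<times> 'b) rel" where
  "osum k r = {((i, x), (j, y)). i \<in> Field k \<and> j \<in> Field k \<and> x \<in> Field (r i) \<and> y \<in> Field (r j) \<and>
      ((i \<noteq> j \<and> (i, j) \<in> k) \<or> (i = j \<and> (x, y) \<in> r i))}"

definition cofinal :: "'a rel \<Rightarrow> 'a set \<Rightarrow> bool" where
  "cofinal r A \<longleftrightarrow> A \<subseteq> Field r \<and> (\<forall>a \<in> Field r. \<exists>b \<in> A. (a, b) \<in> r)"

definition cof_ge :: "'a rel \<Rightarrow> 'k rel \<Rightarrow> bool" where
  "cof_ge r k \<longleftrightarrow> (\<forall>A. cofinal r A \<longrightarrow> (k, card_of A) \<in> ordLeq)"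

definition cof_eq :: "'a rel \<Rightarrow> 'k rel \<Rightarrow> bool" where
  "cof_eq r k \<longleftrightarrow> cof_ge r k \<and> (\<exists>A. cofinal r A \<and> (card_of A, k) \<in> ordIso)"

definition compat :: "'x set \<Rightarrow> ('x \<Rightarrow> 'x \<Rightarrow> bool) \<Rightarrow> 'x \<Rightarrow> 'x \<Rightarrow> bool" where
  "compat P le p q \<longleftrightarrow> (\<exists>r \<in> P. le r p \<and> le r q)"

definition sep_le :: "'x set \<Rightarrow> ('x \<Rightarrow> 'x \<Rightarrow> bool) \<Rightarrow> 'x \<Rightarrow> 'x \<Rightarrow> bool" where
  "sep_le P le p q \<longleftrightarrow> (\<forall>r \<in> P. le r p \<longrightarrow> (\<exists>s \<in> P. le s r \<and> le s q))"

definition aquot :: "'x set \<Rightarrow> ('x \<Rightarrow> 'x \<Rightarrow> bool) \<Rightarrow> 'x set set" where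
  "aquot P le = {{y \<in> P. le x y \<and> le y x} | x. x \<in> P}"

definition aquot_le :: "('x \<Rightarrow> 'x \<Rightarrow> bool) \<Rightarrow> 'x set \<Rightarrow> 'x set \<Rightarrow> bool" where
  "aquot_le le c e \<longleftrightarrow> (\<exists>x \<in> c. \<exists>y \<in> e. le x y)"

definition sq_carrier :: "'x set \<Rightarrow> ('x \<Rightarrow> 'x \<Rightarrow> bool) \<Rightarrow> 'x set set" where
  "sq_carrier P le = aquot P (sep_le P le)"

definition sq_le :: "'x set \<Rightarrow> ('x \<Rightarrow> 'x \<Rightarrow> bool) \<Rightarrow> 'x set \<Rightarrow> 'x set \<Rightarrow> bool" where
  "sq_le P le = aquot_le (sep_le P le)"

definition complete_embedding ::
  "'x set \<Rightarrow> ('x \<Rightarrow> 'x \<Rightarrow> bool) \<Rightarrow> 'y set \<Rightarrow> ('y \<Rightarrow> 'y \<Rightarrow> bool) \<Rightarrow> ('x \<Rightarrow> 'y) \<Rightarrow> bool" where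
  "complete_embedding P leP Q leQ f \<longleftrightarrow>
     (\<forall>p \<in> P. f p \<in> Q) \<and>
     (\<forall>p1 \<in> P. \<forall>p2 \<in> P. leP p1 p2 \<longrightarrow> leQ (f p1) (f p2)) \<and>
     (\<forall>p1 \<in> P. \<forall>p2 \<in> P. \<not> compat P leP p1 p2 \<longleftrightarrow> \<not> compat Q leQ (f p1) (f p2)) \<and>
     (\<forall>q \<in> Q. \<exists>p \<in> P. \<forall>p' \<in> P. leP p' p \<longrightarrow> compat Q leQ (f p') q)"

text \<open>P(omega^d): subsets of Field (omega^d) order-isomorphic to omega^d, ordered by inclusion\<close>
definition Pord :: "'a rel \<Rightarrow> ('a \<Rightarrow> nat) set set" where
  "Pord d = {A. A \<subseteq> Field (opow d) \<and> (Restr (opow d) A, opow d) \<in> ordIso}"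

text \<open>P_kappa = (P(kappa)/[kappa]^{<kappa})^+ : first the preorder on representatives
  (X <= Y iff X - Y is small), then its antisymmetric quotient.\<close>
definition Pk_pre :: "'k rel \<Rightarrow> 'k set set" where
  "Pk_pre k = {X. X \<subseteq> Field k \<and> (card_of X, k) \<notin> ordLess}"

definition Pk_pre_le :: "'k rel \<Rightarrow> 'k set \<Rightarrow> 'k set \<Rightarrow> bool" where
  "Pk_pre_le k X Y \<longleftrightarrow> (card_of (X - Y), k) \<in> ordLess"

definition Pk :: "'k rel \<Rightarrow> 'k set set set" where
  "Pk k = aquot (Pk_pre k) (Pk_pre_le k)"

definition Pk_le :: "'k rel \<Rightarrow> 'k set set \<Rightarrow> 'k set set \<Rightarrow> bool" where
  "Pk_le k = aquot_le (Pk_pre_le k)"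

end

theory Submission
  imports Defs
begin

lemma wo_refl: "Well_order r \<Longrightarrow> x \<in> Field r \<Longrightarrow> (x,x) \<in> r"
  by (simp add: order_on_defs refl_on_def)
lemma wo_trans: "Well_order r \<Longrightarrow> (x,y) \<in> r \<Longrightarrow> (y,z) \<in> r \<Longrightarrow> (x,z) \<in> r"
  by (meson order_on_defs trans_def)
lemma wo_antisym: "Well_order r \<Longrightarrow> (x,y) \<in> r \<Longrightarrow> (y,x) \<in> r \<Longrightarrow> x = y"
  by (meson order_on_defs antisym_def)
lemma wo_total: "Well_order r \<Longrightarrow> x \<in> Field r \<Longrightarrow> y \<in> Field r \<Longrightarrow> (x,y) \<in> r \<or> (y,x) \<in> r"
  by (metis order_on_defs total_on_def wo_refl)
lemma wo_not: "Well_order r \<Longrightarrow> x \<in> Field r \<Longrightarrow> y \<in> Field r \<Longrightarrow> (x,y) \<notin> r \<Longrightarrow> (y,x) \<in> r \<and> y \<noteq> x"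
  using wo_total wo_refl by metis

definition smono :: "'a rel \<Rightarrow> 'b rel \<Rightarrow> ('a \<Rightarrow> 'b) \<Rightarrow> bool" where
  "smono r r' f \<longleftrightarrow> (\<forall>x \<in> Field r. f x \<in> Field r') \<and>
     (\<forall>x y. (x,y) \<in> r \<longrightarrow> x \<noteq> y \<longrightarrow> (f x, f y) \<in> r' \<and> f x \<noteq> f y)"

lemma smono_self:
  assumes W: "Well_order r" and S: "smono r r f" and x: "x \<in> Field r"
  shows "(x, f x) \<in> r"
proof (rule ccontr)
  assume nx: "(x, f x) \<notin> r"
  let ?M = "{x \<in> Field r. (x, f x) \<notin> r}"
  have wf: "wf (r - Id)" using W by (simp add: well_order_on_def)
  have "x \<in> ?M" using x nx by auto
  then obtain m where m: "m \<in> ?M" and mmin: "\<And>y. (y, m) \<in> r - Id \<Longrightarrow> y \<notin> ?M"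
    using wf_eq_minimal[THEN iffD1, OF wf, rule_format, of x ?M] by blast
  have fm: "f m \<in> Field r" using S m unfolding smono_def by auto
  have 1: "(f m, m) \<in> r \<and> f m \<noteq> m" using wo_not[OF W] m fm by blast
  then have 2: "(f (f m), f m) \<in> r \<and> f (f m) \<noteq> f m" using S unfolding smono_def by blast
  have "(f m, f (f m)) \<notin> r" using 2 wo_antisym[OF W] by metis
  then have "f m \<in> ?M" using fm by auto
  moreover have "(f m, m) \<in> r - Id" using 1 by auto
  ultimately show False using mmin by blast
qed

lemma smono_comp: "smono r r' f \<Longrightarrow> smono r' r'' g \<Longrightarrow> smono r r'' (g \<circ> f)"
  unfolding smono_def by auto

lemma smono_ordLeq:
  assumes W: "Well_order r" and W': "Well_order r'" and S: "smono r r' f"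
  shows "(r, r') \<in> ordLeq"
proof (rule ccontr)
  assume "(r, r') \<notin> ordLeq"
  then have "(r', r) \<in> ordLess" using ordLess_or_ordLeq[OF W' W] by blast
  then obtain a where a: "a \<in> Field r" and iso: "(r', Restr r (underS r a)) \<in> ordIso"
    using ordLess_iff_ordIso_Restr[OF W W'] by blast
  then obtain g where g: "iso r' (Restr r (underS r a)) g" unfolding ordIso_def by blast
  have gemb: "embed r' (Restr r (underS r a)) g" using g by (simp add: iso_def)
  have ginj: "inj_on g (Field r')" using g by (simp add: iso_def bij_betw_def)
  have gF: "g ` Field r' \<subseteq> underS r a" using g Field_Restr_subset iso_Field by metis
  have sg: "smono r' r g"
    unfolding smono_def
  proof (intro conjI allI impI ballI)
    fix x assume "x \<in> Field r'" then show "g x \<in> Field r" using gF underS_Field by fastforce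
  next
    fix x y assume xy: "(x,y) \<in> r'" "x \<noteq> y"
    have "(g x, g y) \<in> Restr r (underS r a)" using embed_compat[OF gemb] xy unfolding BNF_Wellorder_Embedding.compat_def by blast
    moreover have "g x \<noteq> g y" using ginj xy by (meson FieldI1 FieldI2 inj_on_def)
    ultimately show "(g x, g y) \<in> r" "g x \<noteq> g y" by auto
  qed
  have "smono r r (g \<circ> f)" using smono_comp[OF S sg] .
  then have "(a, (g \<circ> f) a) \<in> r" using smono_self[OF W] a by blast
  then have "(a, g (f a)) \<in> r" by simp
  moreover have "g (f a) \<in> underS r a" using gF S a unfolding smono_def by auto
  ultimately show False using wo_antisym[OF W] by (metis underS_E)
qed

lemma Restr_ordLeq: "Well_order r \<Longrightarrow> (Restr r A, r) \<in> ordLeq"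
proof -
  assume W: "Well_order r"
  have "smono (Restr r A) r id" unfolding smono_def using Field_Restr_subset by (auto simp: Field_def)
  then show ?thesis using smono_ordLeq[OF Well_order_Restr[OF W] W] by blast
qed

lemma Restr_mono_ordLeq: "Well_order r \<Longrightarrow> A \<subseteq> B \<Longrightarrow> (Restr r A, Restr r B) \<in> ordLeq"
proof -
  assume W: "Well_order r" and AB: "A \<subseteq> B"
  have "Restr (Restr r B) A = Restr r A" using AB by auto
  then show ?thesis using Restr_ordLeq[OF Well_order_Restr[OF W, where A=B], where A=A] by simp
qed

lemma ordLeq_smono: "(r, r') \<in> ordLeq \<Longrightarrow> \<exists>f. smono r r' f"
proof -
  assume "(r, r') \<in> ordLeq"
  then obtain f where W: "Well_order r" and e: "embed r r' f" unfolding ordLeq_def by blast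
  have inj: "inj_on f (Field r)" using embed_inj_on[OF W e] .
  have "smono r r' f" unfolding smono_def
  proof (intro conjI allI impI ballI)
    fix x assume "x \<in> Field r" then show "f x \<in> Field r'" using e embed_Field by blast
  next
    fix x y assume xy: "(x,y) \<in> r" "x \<noteq> y"
    then show "(f x, f y) \<in> r'" using embed_compat[OF e]
      unfolding BNF_Wellorder_Embedding.compat_def by blast
    show "f x \<noteq> f y" using inj xy unfolding inj_on_def by (meson FieldI1 FieldI2)
  qed
  then show ?thesis by blast
qed


lemma Card_inf: "Card_order k \<Longrightarrow> (natLeq, k) \<in> ordLeq \<Longrightarrow> \<not> finite (Field k)"
  by (meson Card_order_iff_ordLeq_card_of infinite_iff_natLeq_ordLeq ordLeq_transitive)

lemma small_finite: "Card_order k \<Longrightarrow> (natLeq, k) \<in> ordLeq \<Longrightarrow> finite A \<Longrightarrow> (card_of A, k) \<in> ordLess"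
  using finite_iff_ordLess_natLeq ordLess_ordLeq_trans by blast

lemma small_Un: "Card_order k \<Longrightarrow> (natLeq, k) \<in> ordLeq \<Longrightarrow> (card_of A, k) \<in> ordLess \<Longrightarrow>
  (card_of B, k) \<in> ordLess \<Longrightarrow> (card_of (A \<union> B), k) \<in> ordLess"
  using card_of_Un_ordLess_infinite_Field Card_inf by blast

lemma small_mono: "A \<subseteq> B \<Longrightarrow> (card_of B, k) \<in> ordLess \<Longrightarrow> (card_of A, k) \<in> ordLess"
  using card_of_mono1 ordLeq_ordLess_trans by blast

lemma small_image: "(card_of A, k) \<in> ordLess \<Longrightarrow> (card_of (f ` A), k) \<in> ordLess"
  using card_of_image ordLeq_ordLess_trans by blast

lemma large_ge: "Card_order k \<Longrightarrow> (card_of X, k) \<notin> ordLess \<Longrightarrow> (k, card_of X) \<in> ordLeq"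
  by (meson card_of_Well_order card_order_on_well_order_on not_ordLess_iff_ordLeq)

lemma large_Restr:
  assumes k: "Card_order k" and X: "X \<subseteq> Field k" and L: "(card_of X, k) \<notin> ordLess"
  shows "(k, Restr k X) \<in> ordLeq"
proof -
  have W: "Well_order k" using k card_order_on_well_order_on by blast
  have "well_order_on X (Restr k X)" using well_order_on_Restr[OF W X] .
  then have "(card_of X, Restr k X) \<in> ordLeq" using card_of_least by blast
  then show ?thesis using large_ge[OF k L] ordLeq_transitive by blast
qed

lemma under_small:
  assumes k: "Card_order k" and inf: "(natLeq, k) \<in> ordLeq" and a: "a \<in> Field k"
  shows "(card_of (under k a), k) \<in> ordLess"
proof -
  have "under k a \<subseteq> underS k a \<union> {a}" by (auto simp: under_def underS_def)
  moreover have "(card_of (underS k a \<union> {a}), k) \<in> ordLess"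
    using small_Un[OF k inf card_of_underS[OF k a] small_finite[OF k inf, of "{a}"]] by simp
  ultimately show ?thesis using small_mono by blast
qed

lemma small_empty: "Card_order k \<Longrightarrow> (natLeq, k) \<in> ordLeq \<Longrightarrow> (card_of {}, k) \<in> ordLess"
  using small_finite by blast


locale blocks =
  fixes W :: "'w rel" and k :: "'k rel" and B :: "'k \<Rightarrow> 'x rel" and h :: "'w \<Rightarrow> 'k \<times> 'x"
  assumes kC: "Card_order k" and kinf: "(natLeq, k) \<in> ordLeq"
  and WW: "Well_order W"
  and hiso: "iso W (osum k B) h"
  and BW: "\<forall>\<xi>\<in>Field k. Well_order (B \<xi>)"
  and cofW: "cof_ge W k"
  and cofB: "\<forall>\<xi>\<in>Field k. cof_ge (B \<xi>) k"
  and monoB: "\<forall>\<xi>\<in>Field k. \<forall>\<zeta>\<in>Field k. (\<xi>,\<zeta>) \<in> k \<longrightarrow> (B \<xi>, B \<zeta>) \<in> ordLeq"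
  and indec: "\<forall>\<xi>\<in>Field k. \<forall>y\<in>Field (B \<xi>). (B \<xi>, Restr (B \<xi>) {z. (y,z) \<in> B \<xi> \<and> z \<noteq> y}) \<in> ordLeq"
begin

abbreviation "S \<equiv> osum k B"
definition blk where "blk w = fst (h w)"
definition pos where "pos w = snd (h w)"
definition copy where "copy A \<longleftrightarrow> A \<subseteq> Field W \<and> (Restr W A, W) \<in> ordIso"
definition large where "large X \<longleftrightarrow> (card_of X, k) \<notin> ordLess"
definition FY where "FY Y = {w \<in> Field W. blk w \<in> Y}"

lemma kW: "Well_order k" using kC card_order_on_well_order_on by blast

lemma osum_mem: "(((i,x),(j,y)) \<in> osum k B) = (i \<in> Field k \<and> j \<in> Field k \<and> x \<in> Field (B i) \<and>
   y \<in> Field (B j) \<and> ((i \<noteq> j \<and> (i,j) \<in> k) \<or> (i = j \<and> (x,y) \<in> B i)))"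
  unfolding osum_def by (simp only: mem_Collect_eq prod.case)

lemma FieldS: "Field S = Sigma (Field k) (\<lambda>i. Field (B i))"
proof
  show "Field S \<subseteq> Sigma (Field k) (\<lambda>i. Field (B i))"
  proof
    fix p assume "p \<in> Field S"
    then obtain q where "(p,q) \<in> S \<or> (q,p) \<in> S" unfolding Field_def by blast
    then show "p \<in> Sigma (Field k) (\<lambda>i. Field (B i))"
    proof (cases p, cases q)
      fix i x j y assume "(p,q) \<in> S \<or> (q,p) \<in> S" "p = (i,x)" "q = (j,y)"
      then show ?thesis by (auto simp: osum_mem)
    qed
  qed
next
  show "Sigma (Field k) (\<lambda>i. Field (B i)) \<subseteq> Field S"
  proof clarify
    fix i x assume i: "i \<in> Field k" and x: "x \<in> Field (B i)"
    have "Well_order (B i)" using BW i by simp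
    then have "(x,x) \<in> B i" using wo_refl x by metis
    then have "((i,x),(i,x)) \<in> S" using i x by (simp add: osum_mem)
    then show "(i,x) \<in> Field S" by (rule FieldI1)
  qed
qed

lemma S_iff: "a \<in> Field S \<Longrightarrow> b \<in> Field S \<Longrightarrow> (a,b) \<in> S \<longleftrightarrow>
   ((fst a \<noteq> fst b \<and> (fst a, fst b) \<in> k) \<or> (fst a = fst b \<and> (snd a, snd b) \<in> B (fst a)))"
proof (cases a, cases b)
  fix i x j y assume ab: "a \<in> Field S" "b \<in> Field S" "a = (i,x)" "b = (j,y)"
  then have "i \<in> Field k" "j \<in> Field k" "x \<in> Field (B i)" "y \<in> Field (B j)" using FieldS by blast+
  then show ?thesis using ab osum_mem[of i x j y] by (simp only: fst_conv snd_conv simp_thms)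
qed

lemma hbij: "bij_betw h (Field W) (Field S)" using hiso unfolding iso_iff2 by (rule conjunct1)
lemma hord: "w \<in> Field W \<Longrightarrow> w' \<in> Field W \<Longrightarrow> (w,w') \<in> W \<longleftrightarrow> (h w, h w') \<in> S"
  using hiso unfolding iso_iff2 by simp
lemma hF: "w \<in> Field W \<Longrightarrow> h w \<in> Field S" using hbij bij_betwE by blast
lemma hinj: "w \<in> Field W \<Longrightarrow> w' \<in> Field W \<Longrightarrow> h w = h w' \<Longrightarrow> w = w'"
  using hbij unfolding bij_betw_def inj_on_def by simp

lemma blkF: "w \<in> Field W \<Longrightarrow> blk w \<in> Field k \<and> pos w \<in> Field (B (blk w))"
  using hF FieldS unfolding blk_def pos_def by (metis SigmaE prod.sel)

lemma Bne: "\<xi> \<in> Field k \<Longrightarrow> Field (B \<xi>) \<noteq> {}"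
proof
  assume xi: "\<xi> \<in> Field k" and e: "Field (B \<xi>) = {}"
  have "cofinal (B \<xi>) {}" using e unfolding cofinal_def by auto
  have "cof_ge (B \<xi>) k" using cofB xi by blast
  then have "(k, card_of ({}::'x set)) \<in> ordLeq" using `cofinal (B \<xi>) {}` unfolding cof_ge_def by blast
  then show False using small_empty[OF kC kinf] not_ordLess_ordLeq by blast
qed

lemma hsurj: "\<xi> \<in> Field k \<Longrightarrow> y \<in> Field (B \<xi>) \<Longrightarrow> \<exists>w \<in> Field W. h w = (\<xi>, y)"
  using hbij FieldS unfolding bij_betw_def by (metis SigmaI imageE)

lemma blk_ne: "\<xi> \<in> Field k \<Longrightarrow> \<exists>w \<in> Field W. blk w = \<xi>"
  using Bne hsurj unfolding blk_def by (metis equals0I fst_conv)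

lemma lt_blk: "w \<in> Field W \<Longrightarrow> w' \<in> Field W \<Longrightarrow> (blk w, blk w') \<in> k \<Longrightarrow> blk w \<noteq> blk w' \<Longrightarrow>
   (w,w') \<in> W \<and> w \<noteq> w'"
  using hord S_iff hF unfolding blk_def by auto

lemma le_blk: "(w,w') \<in> W \<Longrightarrow> (blk w, blk w') \<in> k"
proof -
  assume a: "(w,w') \<in> W"
  have F: "w \<in> Field W" "w' \<in> Field W" using a by (auto intro: FieldI1 FieldI2)
  have "(h w, h w') \<in> S" using hord F a by blast
  then have "(fst (h w) \<noteq> fst (h w') \<and> (fst (h w), fst (h w')) \<in> k) \<or> fst (h w) = fst (h w')"
    using S_iff hF F by blast
  then show ?thesis unfolding blk_def using wo_refl[OF kW] blkF[OF F(1)] unfolding blk_def by auto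
qed

lemma same_blk: "w \<in> Field W \<Longrightarrow> w' \<in> Field W \<Longrightarrow> blk w = blk w' \<Longrightarrow>
   (w,w') \<in> W \<longleftrightarrow> (pos w, pos w') \<in> B (blk w)"
  using hord S_iff hF unfolding blk_def pos_def by auto

lemma klim: "\<xi> \<in> Field k \<Longrightarrow> \<exists>\<zeta>\<in>Field k. \<xi> \<noteq> \<zeta> \<and> (\<xi>,\<zeta>) \<in> k"
  using infinite_Card_order_limit[OF kC Card_inf[OF kC kinf]] by blast

lemma unb_large:
  assumes R: "R \<subseteq> Field k" and U: "\<forall>\<beta>\<in>Field k. \<exists>\<eta>\<in>R. (\<beta>,\<eta>) \<in> k \<and> \<beta> \<noteq> \<eta>"
  shows "large R"
proof -
  define a where "a \<eta> = (SOME w. w \<in> Field W \<and> blk w = \<eta>)" for \<eta>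
  have a: "a \<eta> \<in> Field W \<and> blk (a \<eta>) = \<eta>" if "\<eta> \<in> R" for \<eta>
    unfolding a_def using blk_ne R that by (metis (mono_tags, lifting) someI_ex subsetD)
  have "cofinal W (a ` R)"
    unfolding cofinal_def
  proof (intro conjI ballI)
    show "a ` R \<subseteq> Field W" using a by auto
  next
    fix w assume w: "w \<in> Field W"
    obtain \<eta> where e: "\<eta> \<in> R" "(blk w, \<eta>) \<in> k" "blk w \<noteq> \<eta>" using U blkF[OF w] by blast
    then have "(w, a \<eta>) \<in> W" using lt_blk[OF w] a by metis
    then show "\<exists>b\<in>a ` R. (w, b) \<in> W" using e by blast
  qed
  then have "(k, card_of (a ` R)) \<in> ordLeq" using cofW unfolding cof_ge_def by blast
  then have "(k, card_of R) \<in> ordLeq" using card_of_image ordLeq_transitive by blast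
  then show ?thesis unfolding large_def using not_ordLess_ordLeq by blast
qed

lemma copy_unb:
  assumes A: "copy A" and p: "p \<in> Field W"
  shows "\<exists>x\<in>A. (p,x) \<in> W \<and> p \<noteq> x"
proof (rule ccontr)
  assume N: "\<not> ?thesis"
  have AF: "A \<subseteq> Field W" using A unfolding copy_def by blast
  obtain \<zeta> where z: "\<zeta> \<in> Field k" "blk p \<noteq> \<zeta>" "(blk p, \<zeta>) \<in> k" using klim blkF[OF p] by blast
  obtain p' where p': "p' \<in> Field W" "blk p' = \<zeta>" using blk_ne z by blast
  have pp': "(p,p') \<in> W" "p \<noteq> p'" using lt_blk[OF p p'(1)] z p' by auto
  have "A \<subseteq> underS W p'"
  proof
    fix x assume x: "x \<in> A"
    then have xF: "x \<in> Field W" using AF by blast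
    have "(x,p) \<in> W"
    proof (cases "(p,x) \<in> W")
      case True then have "p = x" using N x by blast
      then show ?thesis using wo_refl[OF WW] p by simp
    next
      case False then show ?thesis using wo_not[OF WW p xF] by blast
    qed
    then have "(x,p') \<in> W" using pp' wo_trans[OF WW] by blast
    moreover have "x \<noteq> p'" using `(x,p) \<in> W` pp' wo_antisym[OF WW] by blast
    ultimately show "x \<in> underS W p'" by (simp add: underS_def)
  qed
  then have "(Restr W A, Restr W (underS W p')) \<in> ordLeq" using Restr_mono_ordLeq[OF WW] by blast
  moreover have "(Restr W (underS W p'), W) \<in> ordLess" using underS_Restr_ordLess[OF WW] p by blast
  moreover have "(W, Restr W A) \<in> ordIso" using A ordIso_symmetric unfolding copy_def by blast
  ultimately have "(W, W) \<in> ordLess" using ordIso_ordLeq_trans ordLeq_ordLess_trans by blast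
  then show False using ordLess_irreflexive by blast
qed

lemma hit_unb:
  assumes A: "copy A" and b: "\<beta> \<in> Field k"
  shows "\<exists>a\<in>A. (\<beta>, blk a) \<in> k \<and> \<beta> \<noteq> blk a"
proof -
  obtain \<zeta> where z: "\<zeta> \<in> Field k" "\<beta> \<noteq> \<zeta>" "(\<beta>, \<zeta>) \<in> k" using klim b by blast
  obtain p where p: "p \<in> Field W" "blk p = \<zeta>" using blk_ne z by blast
  obtain x where x: "x \<in> A" "(p,x) \<in> W" using copy_unb[OF A p(1)] by blast
  have "(\<zeta>, blk x) \<in> k" using le_blk x p by blast
  then have "(\<beta>, blk x) \<in> k" using z wo_trans[OF kW] by blast
  moreover have "\<beta> \<noteq> blk x" using z `(\<zeta>, blk x) \<in> k` wo_antisym[OF kW] by blast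
  ultimately show ?thesis using x by blast
qed

lemma copy_large: assumes A: "copy A" shows "large (blk ` A)"
proof (rule unb_large)
  show "blk ` A \<subseteq> Field k" using blkF A unfolding copy_def by blast
  show "\<forall>\<beta>\<in>Field k. \<exists>\<eta>\<in>blk ` A. (\<beta>, \<eta>) \<in> k \<and> \<beta> \<noteq> \<eta>" using hit_unb[OF A] by blast
qed

lemma copyF: "copy (Field W)"
  unfolding copy_def using Restr_Field[of W] ordIso_reflexive[OF WW] by (metis order_refl)

end


locale blocks_copy = blocks W k B h for W :: "'w rel" and k :: "'k rel" and B :: "'k \<Rightarrow> 'x rel" and h :: "'w \<Rightarrow> 'k \<times> 'x" +
  fixes A and g :: "'w \<Rightarrow> 'w"
  assumes cA: "copy A" and giso: "iso W (Restr W A) g"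
begin

lemma AF: "A \<subseteq> Field W" using cA unfolding copy_def by blast

lemma FRA: "Field (Restr W A) = A"
proof
  show "Field (Restr W A) \<subseteq> A" by (rule Field_Restr_subset)
  show "A \<subseteq> Field (Restr W A)"
  proof
    fix a assume a: "a \<in> A"
    then have "(a,a) \<in> Restr W A" using AF wo_refl[OF WW] by blast
    then show "a \<in> Field (Restr W A)" by (rule FieldI1)
  qed
qed

lemma gbij: "bij_betw g (Field W) A" using giso FRA unfolding iso_iff2 by simp

lemma gF: "x \<in> Field W \<Longrightarrow> g x \<in> A \<and> g x \<in> Field W"
  using gbij AF bij_betwE by blast

lemma gord: "x \<in> Field W \<Longrightarrow> y \<in> Field W \<Longrightarrow> (x,y) \<in> W \<longleftrightarrow> (g x, g y) \<in> W"
proof -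
  assume x: "x \<in> Field W" and y: "y \<in> Field W"
  have "(x,y) \<in> W \<longleftrightarrow> (g x, g y) \<in> Restr W A" using giso x y unfolding iso_iff2 by simp
  then show ?thesis using gF x y by simp
qed

lemma ginj: "x \<in> Field W \<Longrightarrow> y \<in> Field W \<Longrightarrow> g x = g y \<Longrightarrow> x = y"
  using gbij unfolding bij_betw_def inj_on_def by simp

lemma glt: "(x,y) \<in> W \<Longrightarrow> x \<noteq> y \<Longrightarrow> (g x, g y) \<in> W \<and> g x \<noteq> g y"
proof -
  assume xy: "(x,y) \<in> W" "x \<noteq> y"
  have F: "x \<in> Field W" "y \<in> Field W" using xy by (auto intro: FieldI1 FieldI2)
  show ?thesis using gord[OF F] xy ginj[OF F] by blast
qed

lemma gsurj: "a \<in> A \<Longrightarrow> \<exists>x\<in>Field W. g x = a"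
  using gbij unfolding bij_betw_def by blast

definition gb where "gb x = blk (g x)"

lemma gbF: "x \<in> Field W \<Longrightarrow> gb x \<in> Field k"
  unfolding gb_def using gF blkF by blast

lemma gb_mono: "(x,y) \<in> W \<Longrightarrow> (gb x, gb y) \<in> k"
proof -
  assume xy: "(x,y) \<in> W"
  have F: "x \<in> Field W" "y \<in> Field W" using xy by (auto intro: FieldI1 FieldI2)
  have "(g x, g y) \<in> W" using gord[OF F] xy by blast
  then show ?thesis unfolding gb_def by (rule le_blk)
qed

lemma final:
  assumes xi: "\<xi> \<in> Field k"
  shows "\<exists>x0\<in>Field W. blk x0 = \<xi> \<and> (\<forall>x\<in>Field W. blk x = \<xi> \<longrightarrow> (x0,x) \<in> W \<longrightarrow> gb x = gb x0)"
proof -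
  let ?I = "{x\<in>Field W. blk x = \<xi>}"
  let ?Bs = "gb ` ?I"
  obtain \<zeta> where z: "\<zeta> \<in> Field k" "\<xi> \<noteq> \<zeta>" "(\<xi>,\<zeta>) \<in> k" using klim xi by blast
  obtain x' where x': "x' \<in> Field W" "blk x' = \<zeta>" using blk_ne z by blast
  define \<theta> where "\<theta> = gb x'"
  have \<theta>F: "\<theta> \<in> Field k" unfolding \<theta>_def using gbF x' by blast
  have bound: "(gb x, \<theta>) \<in> k" if x: "x \<in> ?I" for x
  proof -
    have "(x,x') \<in> W" using lt_blk[of x x'] x x' z by auto
    then show ?thesis unfolding \<theta>_def by (rule gb_mono)
  qed
  have BsF: "?Bs \<subseteq> Field k" using gbF by blast
  have small: "(card_of ?Bs, k) \<in> ordLess"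
  proof -
    have "?Bs \<subseteq> under k \<theta>" using bound by (auto simp: under_def)
    then show ?thesis using under_small[OF kC kinf \<theta>F] small_mono by blast
  qed
  show ?thesis
  proof (cases "\<exists>\<eta>\<in>?Bs. \<forall>\<beta>\<in>?Bs. (\<beta>,\<eta>) \<in> k")
    case True
    then obtain x0 where x0: "x0 \<in> ?I" and mx: "\<forall>\<beta>\<in>?Bs. (\<beta>, gb x0) \<in> k" by blast
    have "\<forall>x\<in>Field W. blk x = \<xi> \<longrightarrow> (x0,x) \<in> W \<longrightarrow> gb x = gb x0"
    proof (intro ballI impI)
      fix x assume x: "x \<in> Field W" "blk x = \<xi>" "(x0,x) \<in> W"
      have "(gb x0, gb x) \<in> k" using gb_mono x by blast
      moreover have "(gb x, gb x0) \<in> k" using mx x by blast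
      ultimately show "gb x = gb x0" using wo_antisym[OF kW] by blast
    qed
    then show ?thesis using x0 by blast
  next
    case False
    then have nomax: "\<forall>\<eta>\<in>?Bs. \<exists>\<beta>\<in>?Bs. (\<beta>,\<eta>) \<notin> k" by blast
    define t where "t \<beta> = (SOME x. x \<in> ?I \<and> gb x = \<beta>)" for \<beta>
    have t: "t \<beta> \<in> ?I \<and> gb (t \<beta>) = \<beta>" if "\<beta> \<in> ?Bs" for \<beta>
    proof -
      have "\<exists>x. x \<in> ?I \<and> gb x = \<beta>" using that by blast
      then show ?thesis unfolding t_def by (rule someI_ex)
    qed
    let ?C = "(\<lambda>\<beta>. pos (t \<beta>)) ` ?Bs"
    have "cofinal (B \<xi>) ?C"
      unfolding cofinal_def
    proof (intro conjI ballI)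
      show "?C \<subseteq> Field (B \<xi>)"
      proof
        fix c assume "c \<in> ?C"
        then obtain \<beta> where b: "\<beta> \<in> ?Bs" "c = pos (t \<beta>)" by blast
        have "t \<beta> \<in> Field W" "blk (t \<beta>) = \<xi>" using t[OF b(1)] by auto
        then show "c \<in> Field (B \<xi>)" using blkF[of "t \<beta>"] b(2) by simp
      qed
    next
      fix y assume y: "y \<in> Field (B \<xi>)"
      obtain w where w: "w \<in> Field W" "h w = (\<xi>, y)" using hsurj xi y by blast
      have wb: "blk w = \<xi>" "pos w = y" using w unfolding blk_def pos_def by auto
      have b0: "gb w \<in> ?Bs" using w wb by blast
      obtain \<beta>' where b': "\<beta>' \<in> ?Bs" "(\<beta>', gb w) \<notin> k" using nomax b0 by blast
      have "(gb w, \<beta>') \<in> k \<and> gb w \<noteq> \<beta>'" using wo_not[OF kW] b' b0 BsF by blast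
      then have "(g w, g (t \<beta>')) \<in> W" using lt_blk[of "g w" "g (t \<beta>')"] gF w t[OF b'(1)]
        unfolding gb_def by auto
      then have "(w, t \<beta>') \<in> W" using gord w t[OF b'(1)] by blast
      then have "(pos w, pos (t \<beta>')) \<in> B (blk w)" using same_blk w t[OF b'(1)] wb by auto
      then show "\<exists>c\<in>?C. (y, c) \<in> B \<xi>" using wb b' by blast
    qed
    then have "(k, card_of ?C) \<in> ordLeq" using cofB xi unfolding cof_ge_def by blast
    then have "(k, card_of ?Bs) \<in> ordLeq" using card_of_image ordLeq_transitive by blast
    then show ?thesis using small not_ordLess_ordLeq by blast
  qed
qed

definition x0 where "x0 \<xi> = (SOME x0. x0 \<in> Field W \<and> blk x0 = \<xi> \<and>
   (\<forall>x\<in>Field W. blk x = \<xi> \<longrightarrow> (x0,x) \<in> W \<longrightarrow> gb x = gb x0))"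
definition etaf where "etaf \<xi> = gb (x0 \<xi>)"

lemma x0F: "\<xi> \<in> Field k \<Longrightarrow> x0 \<xi> \<in> Field W \<and> blk (x0 \<xi>) = \<xi> \<and>
   (\<forall>x\<in>Field W. blk x = \<xi> \<longrightarrow> (x0 \<xi>,x) \<in> W \<longrightarrow> gb x = etaf \<xi>)"
  unfolding etaf_def x0_def using someI_ex[OF final[unfolded Bex_def]] by blast

lemma etafF: "\<xi> \<in> Field k \<Longrightarrow> etaf \<xi> \<in> Field k"
  unfolding etaf_def using x0F gbF by blast

lemma etaf_mono: "\<xi> \<in> Field k \<Longrightarrow> \<zeta> \<in> Field k \<Longrightarrow> (\<xi>,\<zeta>) \<in> k \<Longrightarrow> (etaf \<xi>, etaf \<zeta>) \<in> k"
proof (cases "\<xi> = \<zeta>")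
  case True
  assume "\<xi> \<in> Field k" then show ?thesis using True etafF wo_refl[OF kW] by blast
next
  case False
  assume a: "\<xi> \<in> Field k" "\<zeta> \<in> Field k" "(\<xi>,\<zeta>) \<in> k"
  have "(x0 \<xi>, x0 \<zeta>) \<in> W" using lt_blk[of "x0 \<xi>" "x0 \<zeta>"] x0F[OF a(1)] x0F[OF a(2)] a False by auto
  then show ?thesis unfolding etaf_def by (rule gb_mono)
qed

lemma gb_le: "x \<in> Field W \<Longrightarrow> (gb x, etaf (blk x)) \<in> k"
proof -
  assume x: "x \<in> Field W"
  let ?\<xi> = "blk x"
  have xi: "?\<xi> \<in> Field k" using blkF x by blast
  note X = x0F[OF xi]
  show ?thesis
  proof (cases "(x0 ?\<xi>, x) \<in> W")
    case True then show ?thesis using X x wo_refl[OF kW] etafF[OF xi] by metis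
  next
    case False
    then have "(x, x0 ?\<xi>) \<in> W" using wo_not[OF WW] x X by blast
    then show ?thesis unfolding etaf_def by (rule gb_mono)
  qed
qed

definition XA where "XA = etaf ` Field k"

lemma XA_sub: "XA \<subseteq> blk ` A"
  unfolding XA_def etaf_def gb_def using x0F gF by blast

lemma XA_F: "XA \<subseteq> Field k" unfolding XA_def using etafF by blast

lemma XA_large: "large XA"
proof (rule unb_large[OF XA_F], intro ballI)
  fix \<beta> assume b: "\<beta> \<in> Field k"
  obtain a where a: "a \<in> A" "(\<beta>, blk a) \<in> k" "\<beta> \<noteq> blk a" using hit_unb[OF cA b] by blast
  obtain x where x: "x \<in> Field W" "g x = a" using gsurj a by blast
  have le: "(blk a, etaf (blk x)) \<in> k" using gb_le[OF x(1)] x unfolding gb_def by simp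
  have "(\<beta>, etaf (blk x)) \<in> k" using a le wo_trans[OF kW] by blast
  moreover have "\<beta> \<noteq> etaf (blk x)" using a le wo_antisym[OF kW] by blast
  moreover have "etaf (blk x) \<in> XA" unfolding XA_def using blkF x by blast
  ultimately show "\<exists>\<eta>\<in>XA. (\<beta>, \<eta>) \<in> k \<and> \<beta> \<noteq> \<eta>" by blast
qed

lemma XA_cover: "\<xi> \<in> Field k \<Longrightarrow> \<exists>x\<in>Field W. blk x = \<xi> \<and> gb x \<in> XA"
  using x0F unfolding XA_def etaf_def by blast

end


context blocks_copy begin

lemma sub_copy:
  assumes Y: "large (Y \<inter> XA)"
  shows "\<exists>s. copy s \<and> s \<subseteq> A \<and> s \<subseteq> FY Y"
proof -
  let ?Y = "Y \<inter> XA"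
  have YF: "?Y \<subseteq> Field k" using XA_F by blast
  have "(k, Restr k ?Y) \<in> ordLeq" using large_Restr[OF kC YF] Y unfolding large_def by blast
  then obtain e where e: "smono k (Restr k ?Y) e" using ordLeq_smono by blast
  have eF: "e \<alpha> \<in> ?Y" if "\<alpha> \<in> Field k" for \<alpha>
  proof -
    have "e \<alpha> \<in> Field (Restr k ?Y)" using e that unfolding smono_def by simp
    then show ?thesis using Field_Restr_subset by fast
  qed
  have elt: "(e \<alpha>, e \<alpha>') \<in> k \<and> e \<alpha> \<noteq> e \<alpha>'" if "(\<alpha>,\<alpha>') \<in> k" "\<alpha> \<noteq> \<alpha>'" for \<alpha> \<alpha>'
  proof -
    have "(e \<alpha>, e \<alpha>') \<in> Restr k ?Y \<and> e \<alpha> \<noteq> e \<alpha>'" using e that unfolding smono_def by simp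
    then show ?thesis by simp
  qed
  define xi where "xi \<eta> = (SOME \<xi>. \<xi> \<in> Field k \<and> etaf \<xi> = \<eta>)" for \<eta>
  have xi: "xi \<eta> \<in> Field k \<and> etaf (xi \<eta>) = \<eta>" if "\<eta> \<in> XA" for \<eta>
  proof -
    have "\<exists>\<xi>. \<xi> \<in> Field k \<and> etaf \<xi> = \<eta>" using that unfolding XA_def by blast
    then show ?thesis unfolding xi_def by (rule someI_ex)
  qed
  define u where "u \<alpha> = xi (e \<alpha>)" for \<alpha>
  have uF: "u \<alpha> \<in> Field k \<and> etaf (u \<alpha>) = e \<alpha>" if "\<alpha> \<in> Field k" for \<alpha>
    unfolding u_def using xi eF[OF that] by blast
  have us: "smono k k u"
    unfolding smono_def
  proof (intro conjI allI impI ballI)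
    fix \<alpha> assume "\<alpha> \<in> Field k" then show "u \<alpha> \<in> Field k" using uF by blast
  next
    fix \<alpha> \<alpha>' assume a: "(\<alpha>,\<alpha>') \<in> k" "\<alpha> \<noteq> \<alpha>'"
    have F: "\<alpha> \<in> Field k" "\<alpha>' \<in> Field k" using a by (auto intro: FieldI1 FieldI2)
    have n: "(u \<alpha>', u \<alpha>) \<notin> k"
    proof
      assume "(u \<alpha>', u \<alpha>) \<in> k"
      then have "(e \<alpha>', e \<alpha>) \<in> k" using etaf_mono uF F by metis
      then show False using elt[OF a] wo_antisym[OF kW] by metis
    qed
    then show "(u \<alpha>, u \<alpha>') \<in> k" "u \<alpha> \<noteq> u \<alpha>'" using wo_not[OF kW] uF F by blast+
  qed
  have uge: "(\<alpha>, u \<alpha>) \<in> k" if "\<alpha> \<in> Field k" for \<alpha> using smono_self[OF kW us that] .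
  define y0 where "y0 \<alpha> = pos (x0 (u \<alpha>))" for \<alpha>
  define Fin where "Fin \<alpha> = {z. (y0 \<alpha>, z) \<in> B (u \<alpha>) \<and> z \<noteq> y0 \<alpha>}" for \<alpha>
  have y0F: "y0 \<alpha> \<in> Field (B (u \<alpha>))" if "\<alpha> \<in> Field k" for \<alpha>
    using x0F[of "u \<alpha>"] uF[OF that] blkF unfolding y0_def by metis
  have ex: "\<exists>f. smono (B \<alpha>) (Restr (B (u \<alpha>)) (Fin \<alpha>)) f" if a: "\<alpha> \<in> Field k" for \<alpha>
  proof -
    have "(B \<alpha>, B (u \<alpha>)) \<in> ordLeq" using monoB a uF uge by blast
    moreover have "(B (u \<alpha>), Restr (B (u \<alpha>)) (Fin \<alpha>)) \<in> ordLeq"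
      using indec uF[OF a] y0F[OF a] unfolding Fin_def by blast
    ultimately show ?thesis using ordLeq_transitive ordLeq_smono by blast
  qed
  define \<phi> where "\<phi> \<alpha> = (SOME f. smono (B \<alpha>) (Restr (B (u \<alpha>)) (Fin \<alpha>)) f)" for \<alpha>
  have \<phi>: "smono (B \<alpha>) (Restr (B (u \<alpha>)) (Fin \<alpha>)) (\<phi> \<alpha>)" if "\<alpha> \<in> Field k" for \<alpha>
    unfolding \<phi>_def using someI_ex[OF ex[OF that]] .
  have \<phi>F: "\<phi> \<alpha> y \<in> Fin \<alpha>" if "\<alpha> \<in> Field k" "y \<in> Field (B \<alpha>)" for \<alpha> y
  proof -
    have "\<phi> \<alpha> y \<in> Field (Restr (B (u \<alpha>)) (Fin \<alpha>))" using \<phi>[OF that(1)] that(2) unfolding smono_def by simp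
    then show ?thesis using Field_Restr_subset by fast
  qed
  have \<phi>F2: "\<phi> \<alpha> y \<in> Field (B (u \<alpha>))" if "\<alpha> \<in> Field k" "y \<in> Field (B \<alpha>)" for \<alpha> y
    using \<phi>F[OF that] unfolding Fin_def by (auto intro: FieldI2)
  define hinv where "hinv = inv_into (Field W) h"
  have hinv: "hinv p \<in> Field W \<and> h (hinv p) = p" if "p \<in> Field S" for p
  proof -
    have "hinv p \<in> Field W" unfolding hinv_def using bij_betw_inv_into[OF hbij] that bij_betwE by blast
    moreover have "p \<in> h ` Field W" using hbij that bij_betw_imp_surj_on by blast
    ultimately show ?thesis unfolding hinv_def using f_inv_into_f by metis
  qed
  define z where "z p = hinv (u (fst p), \<phi> (fst p) (snd p))" for p
  have pF: "fst p \<in> Field k \<and> snd p \<in> Field (B (fst p))" if "p \<in> Field S" for p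
    using that FieldS by (cases p) auto
  have zF: "z p \<in> Field W \<and> blk (z p) = u (fst p) \<and> pos (z p) = \<phi> (fst p) (snd p)" if p: "p \<in> Field S" for p
  proof -
    have "(u (fst p), \<phi> (fst p) (snd p)) \<in> Field S"
      using FieldS uF pF[OF p] \<phi>F2 by auto
    then show ?thesis unfolding z_def blk_def pos_def using hinv by auto
  qed
  have zafter: "(x0 (u (fst p)), z p) \<in> W" if p: "p \<in> Field S" for p
  proof -
    let ?a = "fst p"
    have a: "?a \<in> Field k" using pF p by blast
    have X: "x0 (u ?a) \<in> Field W" "blk (x0 (u ?a)) = u ?a" using x0F uF[OF a] by blast+
    have "(y0 ?a, \<phi> ?a (snd p)) \<in> B (u ?a)" using \<phi>F[OF a] pF[OF p] unfolding Fin_def by blast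
    then show ?thesis using same_blk[of "x0 (u ?a)" "z p"] X zF[OF p] unfolding y0_def by simp
  qed
  have zgb: "gb (z p) = e (fst p)" if p: "p \<in> Field S" for p
  proof -
    have a: "fst p \<in> Field k" using pF p by blast
    have "gb (z p) = etaf (u (fst p))" using x0F[of "u (fst p)"] uF[OF a] zF[OF p] zafter[OF p] by blast
    then show ?thesis using uF[OF a] by simp
  qed
  define \<Phi> where "\<Phi> p = g (z p)" for p
  define s where "s = \<Phi> ` Field S"
  have sA: "s \<subseteq> A" unfolding s_def \<Phi>_def using gF zF by (auto simp del: Sigma_cong)
  have sY: "s \<subseteq> FY Y"
  proof
    fix w assume "w \<in> s"
    then obtain p where p: "p \<in> Field S" "w = \<Phi> p" unfolding s_def by blast
    have "blk w = e (fst p)" using zgb[OF p(1)] p(2) unfolding \<Phi>_def gb_def by simp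
    then have "blk w \<in> Y" using eF[of "fst p"] pF[OF p(1)] by simp
    moreover have "w \<in> Field W" using gF[of "z p"] zF[OF p(1)] p(2) unfolding \<Phi>_def by simp
    ultimately show "w \<in> FY Y" unfolding FY_def by blast
  qed
  have sW: "s \<subseteq> Field W" using sA AF by blast
  have FRs: "Field (Restr W s) = s"
  proof
    show "Field (Restr W s) \<subseteq> s" by (rule Field_Restr_subset)
    show "s \<subseteq> Field (Restr W s)"
    proof
      fix a assume a: "a \<in> s"
      then have "(a,a) \<in> Restr W s" using sW wo_refl[OF WW] by blast
      then show "a \<in> Field (Restr W s)" by (rule FieldI1)
    qed
  qed
  have sm1: "smono S (Restr W s) \<Phi>"
    unfolding smono_def
  proof (intro conjI allI impI ballI)
    fix p assume "p \<in> Field S"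
    then have "\<Phi> p \<in> s" unfolding s_def by blast
    then show "\<Phi> p \<in> Field (Restr W s)" using FRs by simp
  next
    fix p q assume pq: "(p,q) \<in> S" "p \<noteq> q"
    have F: "p \<in> Field S" "q \<in> Field S" using pq by (auto intro: FieldI1 FieldI2)
    have ins: "\<Phi> p \<in> s" "\<Phi> q \<in> s" unfolding s_def using F by blast+
    have "(\<Phi> p, \<Phi> q) \<in> W \<and> \<Phi> p \<noteq> \<Phi> q"
    proof (cases "fst p = fst q")
      case False
      then have "(fst p, fst q) \<in> k" using S_iff[OF F] pq by blast
      then have "(e (fst p), e (fst q)) \<in> k \<and> e (fst p) \<noteq> e (fst q)" using elt False by blast
      then show ?thesis using lt_blk[of "\<Phi> p" "\<Phi> q"] zgb F gF zF unfolding \<Phi>_def gb_def by metis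
    next
      case True
      let ?a = "fst p"
      have a: "?a \<in> Field k" using pF F by blast
      have "(snd p, snd q) \<in> B ?a" using S_iff[OF F] pq True by blast
      moreover have "snd p \<noteq> snd q" using True pq by (cases p, cases q) auto
      ultimately have "(\<phi> ?a (snd p), \<phi> ?a (snd q)) \<in> Restr (B (u ?a)) (Fin ?a) \<and> \<phi> ?a (snd p) \<noteq> \<phi> ?a (snd q)"
        using \<phi>[OF a] unfolding smono_def by simp
      then have "(pos (z p), pos (z q)) \<in> B (blk (z p)) \<and> pos (z p) \<noteq> pos (z q)"
        using zF[OF F(1)] zF[OF F(2)] True by auto
      then have "(z p, z q) \<in> W \<and> z p \<noteq> z q" using same_blk[of "z p" "z q"] zF[OF F(1)] zF[OF F(2)] True by auto
      then show ?thesis unfolding \<Phi>_def using glt by blast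
    qed
    then show "(\<Phi> p, \<Phi> q) \<in> Restr W s" "\<Phi> p \<noteq> \<Phi> q" using ins by auto
  qed
  have sm2: "smono W S h"
    unfolding smono_def
  proof (intro conjI allI impI ballI)
    fix w assume "w \<in> Field W" then show "h w \<in> Field S" by (rule hF)
  next
    fix w w' assume ww: "(w,w') \<in> W" "w \<noteq> w'"
    have F: "w \<in> Field W" "w' \<in> Field W" using ww by (auto intro: FieldI1 FieldI2)
    show "(h w, h w') \<in> S" using hord[OF F] ww by blast
    show "h w \<noteq> h w'" using hinj[OF F] ww by blast
  qed
  have "(W, Restr W s) \<in> ordLeq"
    using smono_ordLeq[OF WW Well_order_Restr[OF WW] smono_comp[OF sm2 sm1]] .
  moreover have "(Restr W s, W) \<in> ordLeq" using Restr_ordLeq[OF WW] .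
  ultimately have "(Restr W s, W) \<in> ordIso" using ordIso_iff_ordLeq by blast
  then have "copy s" unfolding copy_def using sW by blast
  then show ?thesis using sA sY by blast
qed

end


context blocks begin

lemma main:
  assumes A: "copy A"
  shows "\<exists>XA. XA \<subseteq> blk ` A \<and> large XA \<and> (\<forall>Y. large (Y \<inter> XA) \<longrightarrow> (\<exists>s. copy s \<and> s \<subseteq> A \<and> s \<subseteq> FY Y))"
proof -
  have "(W, Restr W A) \<in> ordIso" using A ordIso_symmetric unfolding copy_def by blast
  then obtain g where g: "iso W (Restr W A) g" unfolding ordIso_def by blast
  interpret C: blocks_copy W k B h A g
    by (unfold_locales; fact A g)
  show ?thesis using C.XA_sub C.XA_large C.sub_copy by blast
qed

lemma large_mono: "large X \<Longrightarrow> X \<subseteq> Y \<Longrightarrow> large Y"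
  unfolding large_def using small_mono by blast

lemma FY_copy:
  assumes X: "X \<subseteq> Field k" and L: "large X"
  shows "copy (FY X)"
proof -
  have g: "iso W (Restr W (Field W)) id" using id_iso[of W] Restr_Field[of W] by simp
  interpret C: blocks_copy W k B h "Field W" id
    by (unfold_locales; fact copyF g)
  have "Field k \<subseteq> C.XA" using C.XA_cover unfolding C.gb_def by fastforce
  then have "large (X \<inter> C.XA)" using L X by (metis inf.absorb1 subset_trans)
  then obtain s where s: "copy s" "s \<subseteq> FY X" using C.sub_copy by blast
  have FYW: "FY X \<subseteq> Field W" unfolding FY_def by blast
  have "(W, Restr W s) \<in> ordLeq" using s(1) ordIso_symmetric ordIso_iff_ordLeq unfolding copy_def by blast
  also have "(Restr W s, Restr W (FY X)) \<in> ordLeq" using Restr_mono_ordLeq[OF WW s(2)] .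
  finally have "(W, Restr W (FY X)) \<in> ordLeq" .
  moreover have "(Restr W (FY X), W) \<in> ordLeq" using Restr_ordLeq[OF WW] .
  ultimately show ?thesis unfolding copy_def using FYW ordIso_iff_ordLeq by blast
qed

definition small where "small X \<longleftrightarrow> (card_of X, k) \<in> ordLess"

lemma large_small: "large X \<longleftrightarrow> \<not> small X" unfolding large_def small_def by simp

lemma small_Un': "small X \<Longrightarrow> small Y \<Longrightarrow> small (X \<union> Y)"
  unfolding small_def using small_Un[OF kC kinf] by blast

lemma small_sub: "X \<subseteq> Y \<Longrightarrow> small Y \<Longrightarrow> small X"
  unfolding small_def using small_mono by blast

lemma small_emp: "small {}"
  unfolding small_def using small_empty[OF kC kinf] by blast

lemma small_tri: "small (X - Y) \<Longrightarrow> small (Y - Z) \<Longrightarrow> small (X - Z)"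
proof -
  assume "small (X - Y)" "small (Y - Z)"
  then have "small ((X - Y) \<union> (Y - Z))" by (rule small_Un')
  then show ?thesis by (rule small_sub[rotated]) blast
qed

abbreviation "Q \<equiv> {A. copy A}"
abbreviation sepl where "sepl \<equiv> sep_le Q (\<subseteq>)"

lemma sepl_refl: "sepl p p" unfolding sep_le_def by blast
lemma sepl_subset: "p \<subseteq> q \<Longrightarrow> sepl p q" unfolding sep_le_def by blast
lemma sepl_trans: "sepl p q \<Longrightarrow> sepl q r \<Longrightarrow> sepl p r"
proof -
  assume pq: "sepl p q" and qr: "sepl q r"
  show "sepl p r" unfolding sep_le_def
  proof (intro ballI impI)
    fix t assume t: "t \<in> Q" "t \<subseteq> p"
    obtain s where s: "s \<in> Q" "s \<subseteq> t" "s \<subseteq> q" using pq t unfolding sep_le_def by blast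
    obtain s' where s': "s' \<in> Q" "s' \<subseteq> s" "s' \<subseteq> r" using qr s unfolding sep_le_def by blast
    show "\<exists>s\<in>Q. s \<subseteq> t \<and> s \<subseteq> r" using s s' by blast
  qed
qed
lemma sepl_common: "p \<in> Q \<Longrightarrow> sepl p a \<Longrightarrow> sepl p b \<Longrightarrow> \<exists>s\<in>Q. s \<subseteq> a \<and> s \<subseteq> b"
proof -
  assume p: "p \<in> Q" and pa: "sepl p a" and pb: "sepl p b"
  obtain s where s: "s \<in> Q" "s \<subseteq> p" "s \<subseteq> a" using pa p unfolding sep_le_def by blast
  obtain s' where s': "s' \<in> Q" "s' \<subseteq> s" "s' \<subseteq> b" using pb s unfolding sep_le_def by blast
  show ?thesis using s s' by blast
qed

definition sqcls where "sqcls x = {y \<in> Q. sepl x y \<and> sepl y x}"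

lemma sq_carrier_eq: "sq_carrier Q (\<subseteq>) = {sqcls x | x. x \<in> Q}"
  unfolding sq_carrier_def aquot_def sqcls_def by simp

lemma sq_le_eq: "sq_le Q (\<subseteq>) c e \<longleftrightarrow> (\<exists>x\<in>c. \<exists>y\<in>e. sepl x y)"
  unfolding sq_le_def aquot_le_def by simp

lemma self_sqcls: "x \<in> Q \<Longrightarrow> x \<in> sqcls x" unfolding sqcls_def using sepl_refl by blast

lemma sq_compat:
  assumes a: "a \<in> Q" and b: "b \<in> Q"
  shows "compat (sq_carrier Q (\<subseteq>)) (sq_le Q (\<subseteq>)) (sqcls a) (sqcls b) \<longleftrightarrow> (\<exists>s\<in>Q. s \<subseteq> a \<and> s \<subseteq> b)"
proof
  assume "compat (sq_carrier Q (\<subseteq>)) (sq_le Q (\<subseteq>)) (sqcls a) (sqcls b)"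
  then obtain r where r: "r \<in> sq_carrier Q (\<subseteq>)" "sq_le Q (\<subseteq>) r (sqcls a)" "sq_le Q (\<subseteq>) r (sqcls b)"
    unfolding compat_def by blast
  obtain c where c: "c \<in> Q" "r = sqcls c" using r(1) unfolding sq_carrier_eq by blast
  obtain x y where xy: "x \<in> r" "y \<in> sqcls a" "sepl x y" using r(2) unfolding sq_le_eq by blast
  obtain x' y' where xy': "x' \<in> r" "y' \<in> sqcls b" "sepl x' y'" using r(3) unfolding sq_le_eq by blast
  have "sepl y a" using xy(2) unfolding sqcls_def by blast
  then have xa: "sepl x a" using xy(3) sepl_trans by blast
  have "sepl x c" "sepl c x'" using xy(1) xy'(1) c(2) unfolding sqcls_def by blast+
  then have "sepl x x'" using sepl_trans by blast
  moreover have "sepl y' b" using xy'(2) unfolding sqcls_def by blast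
  ultimately have xb: "sepl x b" using xy'(3) sepl_trans by blast
  have "x \<in> Q" using xy(1) c(2) unfolding sqcls_def by blast
  then show "\<exists>s\<in>Q. s \<subseteq> a \<and> s \<subseteq> b" using sepl_common xa xb by blast
next
  assume "\<exists>s\<in>Q. s \<subseteq> a \<and> s \<subseteq> b"
  then obtain s where s: "s \<in> Q" "s \<subseteq> a" "s \<subseteq> b" by blast
  have "sqcls s \<in> sq_carrier Q (\<subseteq>)" unfolding sq_carrier_eq using s(1) by blast
  moreover have "sq_le Q (\<subseteq>) (sqcls s) (sqcls a)"
    unfolding sq_le_eq using self_sqcls[OF s(1)] self_sqcls[OF a] sepl_subset[OF s(2)] by blast
  moreover have "sq_le Q (\<subseteq>) (sqcls s) (sqcls b)"
    unfolding sq_le_eq using self_sqcls[OF s(1)] self_sqcls[OF b] sepl_subset[OF s(3)] by blast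
  ultimately show "compat (sq_carrier Q (\<subseteq>)) (sq_le Q (\<subseteq>)) (sqcls a) (sqcls b)"
    unfolding compat_def by blast
qed

end


context blocks begin

lemma Pk_pre_eq: "Pk_pre k = {X. X \<subseteq> Field k \<and> large X}"
  unfolding Pk_pre_def large_def by simp
lemma Pk_pre_le_eq: "Pk_pre_le k X Y \<longleftrightarrow> small (X - Y)"
  unfolding Pk_pre_le_def small_def by simp

definition cls where "cls X = {Y \<in> Pk_pre k. small (X - Y) \<and> small (Y - X)}"

lemma Pk_eq: "Pk k = {cls X | X. X \<in> Pk_pre k}"
  unfolding Pk_def aquot_def cls_def Pk_pre_le_eq by simp

lemma Pk_le_eq: "Pk_le k c e \<longleftrightarrow> (\<exists>X\<in>c. \<exists>Y\<in>e. small (X - Y))"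
  unfolding Pk_le_def aquot_le_def Pk_pre_le_eq by simp

lemma self_cls: "X \<in> Pk_pre k \<Longrightarrow> X \<in> cls X"
  unfolding cls_def using small_emp by simp

lemma cls_sub: "c \<in> Pk k \<Longrightarrow> c \<subseteq> Pk_pre k"
  unfolding Pk_eq cls_def by blast

definition rep where "rep c = (SOME X. X \<in> c)"

lemma rep:
  assumes c: "c \<in> Pk k"
  shows "rep c \<in> c \<and> rep c \<in> Pk_pre k \<and> (\<forall>Y\<in>c. small (rep c - Y) \<and> small (Y - rep c))"
proof -
  obtain X where X: "X \<in> Pk_pre k" "c = cls X" using c Pk_eq by blast
  have "X \<in> c" using X self_cls by blast
  then have rc: "rep c \<in> c" unfolding rep_def by (rule someI)
  then have r1: "rep c \<in> Pk_pre k" "small (X - rep c)" "small (rep c - X)" using X unfolding cls_def by blast+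
  have "\<forall>Y\<in>c. small (rep c - Y) \<and> small (Y - rep c)"
  proof
    fix Y assume "Y \<in> c"
    then have "small (X - Y)" "small (Y - X)" using X unfolding cls_def by blast+
    then show "small (rep c - Y) \<and> small (Y - rep c)" using small_tri[OF r1(3)] small_tri[OF _ r1(2)] by blast
  qed
  then show ?thesis using rc r1 by blast
qed

lemma K1:
  assumes X: "X \<subseteq> Field k" and Y: "Y \<subseteq> Field k" and XY: "small (X - Y)"
  shows "sepl (FY X) (FY Y)"
  unfolding sep_le_def
proof (intro ballI impI)
  fix r assume r: "r \<in> Q" "r \<subseteq> FY X"
  then have cr: "copy r" by simp
  obtain Xr where Xr: "Xr \<subseteq> blk ` r" "large Xr"
    and sub: "\<forall>Y. large (Y \<inter> Xr) \<longrightarrow> (\<exists>s. copy s \<and> s \<subseteq> r \<and> s \<subseteq> FY Y)"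
    using main[OF cr] by blast
  have "Xr \<subseteq> X" using Xr(1) r(2) unfolding FY_def by blast
  then have "Xr \<subseteq> (X - Y) \<union> (Y \<inter> Xr)" by blast
  then have "large (Y \<inter> Xr)" using Xr(2) XY small_Un' small_sub large_small by metis
  then obtain s where "copy s" "s \<subseteq> r" "s \<subseteq> FY Y" using sub by blast
  then show "\<exists>s\<in>Q. s \<subseteq> r \<and> s \<subseteq> FY Y" by blast
qed

lemma common_large:
  assumes s: "copy s" "s \<subseteq> FY X" "s \<subseteq> FY Y"
  shows "large (X \<inter> Y)"
proof -
  have "blk ` s \<subseteq> X \<inter> Y" using s unfolding FY_def by blast
  then show ?thesis using copy_large[OF s(1)] large_mono by blast
qed

lemma Pk_compat:
  assumes c1: "c1 \<in> Pk k" and c2: "c2 \<in> Pk k"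
  shows "compat (Pk k) (Pk_le k) c1 c2 \<longleftrightarrow> large (rep c1 \<inter> rep c2)"
proof
  assume "compat (Pk k) (Pk_le k) c1 c2"
  then obtain r where r: "r \<in> Pk k" "Pk_le k r c1" "Pk_le k r c2" unfolding compat_def by blast
  obtain Z X where ZX: "Z \<in> r" "X \<in> c1" "small (Z - X)" using r(2) unfolding Pk_le_eq by blast
  obtain Z' Y where ZY: "Z' \<in> r" "Y \<in> c2" "small (Z' - Y)" using r(3) unfolding Pk_le_eq by blast
  note R = rep[OF r(1)] and R1 = rep[OF c1] and R2 = rep[OF c2]
  have "small (Z - rep r)" "small (rep r - Z')" using R ZX(1) ZY(1) by blast+
  then have "small (Z - Z')" by (rule small_tri)
  then have "small (Z - Y)" using ZY(3) by (rule small_tri)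
  moreover have "small (Y - rep c2)" using R2 ZY(2) by blast
  ultimately have s2: "small (Z - rep c2)" by (rule small_tri)
  have "small (X - rep c1)" using R1 ZX(2) by blast
  with ZX(3) have s1: "small (Z - rep c1)" by (rule small_tri)
  have "Z \<in> Pk_pre k" using cls_sub[OF r(1)] ZX(1) by blast
  then have Zl: "large Z" unfolding Pk_pre_eq by blast
  show "large (rep c1 \<inter> rep c2)"
  proof (rule ccontr)
    assume "\<not> large (rep c1 \<inter> rep c2)"
    then have "small (rep c1 \<inter> rep c2)" using large_small by blast
    then have "small ((Z - rep c1) \<union> (Z - rep c2) \<union> (rep c1 \<inter> rep c2))" using s1 s2 small_Un' by blast
    then have "small Z" by (rule small_sub[rotated]) blast
    then show False using Zl large_small by blast
  qed
next
  assume L: "large (rep c1 \<inter> rep c2)"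
  note R1 = rep[OF c1] and R2 = rep[OF c2]
  let ?X = "rep c1 \<inter> rep c2"
  have XP: "?X \<in> Pk_pre k" using L R1 unfolding Pk_pre_eq by blast
  have cP: "cls ?X \<in> Pk k" using XP Pk_eq by blast
  have e1: "?X - rep c1 = {}" "?X - rep c2 = {}" by blast+
  have m1: "?X \<in> cls ?X" "rep c1 \<in> c1" "rep c2 \<in> c2"
    using self_cls[OF XP] conjunct1[OF R1] conjunct1[OF R2] by - assumption+
  have m2: "small (?X - rep c1)" "small (?X - rep c2)"
    by (subst e1(1), rule small_emp) (subst e1(2), rule small_emp)
  have "Pk_le k (cls ?X) c1" unfolding Pk_le_eq using m2(1) m1(2) m1(1) by blast
  moreover have "Pk_le k (cls ?X) c2" unfolding Pk_le_eq using m2(2) m1(3) m1(1) by blast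
  ultimately show "compat (Pk k) (Pk_le k) c1 c2" unfolding compat_def using cP by blast
qed

definition fe where "fe c = sqcls (FY (rep c))"

lemma FY_rep: "c \<in> Pk k \<Longrightarrow> FY (rep c) \<in> Q"
  using rep FY_copy unfolding Pk_pre_eq by blast

theorem embedding: "complete_embedding (Pk k) (Pk_le k) (sq_carrier Q (\<subseteq>)) (sq_le Q (\<subseteq>)) fe"
  unfolding complete_embedding_def
proof (intro conjI ballI impI)
  fix c assume c: "c \<in> Pk k"
  show "fe c \<in> sq_carrier Q (\<subseteq>)" unfolding fe_def sq_carrier_eq using FY_rep[OF c] by blast
next
  fix c1 c2 assume c: "c1 \<in> Pk k" "c2 \<in> Pk k" and le: "Pk_le k c1 c2"
  obtain X Y where XY: "X \<in> c1" "Y \<in> c2" "small (X - Y)" using le unfolding Pk_le_eq by blast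
  note R1 = rep[OF c(1)] and R2 = rep[OF c(2)]
  have "small (rep c1 - X)" using R1 XY(1) by blast
  then have "small (rep c1 - Y)" using XY(3) by (rule small_tri)
  moreover have "small (Y - rep c2)" using R2 XY(2) by blast
  ultimately have sm: "small (rep c1 - rep c2)" by (rule small_tri)
  have F: "rep c1 \<subseteq> Field k" "rep c2 \<subseteq> Field k" using R1 R2 unfolding Pk_pre_eq by blast+
  have "sepl (FY (rep c1)) (FY (rep c2))" using K1[OF F sm] .
  then show "sq_le Q (\<subseteq>) (fe c1) (fe c2)" unfolding fe_def sq_le_eq
    using self_sqcls[OF FY_rep[OF c(1)]] self_sqcls[OF FY_rep[OF c(2)]] by blast
next
  fix c1 c2 assume c: "c1 \<in> Pk k" "c2 \<in> Pk k"
  note R1 = rep[OF c(1)] and R2 = rep[OF c(2)]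
  have F: "rep c1 \<subseteq> Field k" "rep c2 \<subseteq> Field k" using R1 R2 unfolding Pk_pre_eq by blast+
  have "compat (sq_carrier Q (\<subseteq>)) (sq_le Q (\<subseteq>)) (fe c1) (fe c2) \<longleftrightarrow> (\<exists>s\<in>Q. s \<subseteq> FY (rep c1) \<and> s \<subseteq> FY (rep c2))"
    unfolding fe_def using sq_compat FY_rep c by blast
  also have "\<dots> \<longleftrightarrow> large (rep c1 \<inter> rep c2)"
  proof
    assume "\<exists>s\<in>Q. s \<subseteq> FY (rep c1) \<and> s \<subseteq> FY (rep c2)"
    then show "large (rep c1 \<inter> rep c2)" using common_large by blast
  next
    assume L: "large (rep c1 \<inter> rep c2)"
    have "copy (FY (rep c1 \<inter> rep c2))" using FY_copy L F by blast
    moreover have "FY (rep c1 \<inter> rep c2) \<subseteq> FY (rep c1)" "FY (rep c1 \<inter> rep c2) \<subseteq> FY (rep c2)"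
      unfolding FY_def by blast+
    ultimately show "\<exists>s\<in>Q. s \<subseteq> FY (rep c1) \<and> s \<subseteq> FY (rep c2)" by blast
  qed
  also have "\<dots> \<longleftrightarrow> compat (Pk k) (Pk_le k) c1 c2" using Pk_compat[OF c] by simp
  finally show "(\<not> compat (Pk k) (Pk_le k) c1 c2) = (\<not> compat (sq_carrier Q (\<subseteq>)) (sq_le Q (\<subseteq>)) (fe c1) (fe c2))"
    by simp
next
  fix q assume q: "q \<in> sq_carrier Q (\<subseteq>)"
  then obtain a where a: "a \<in> Q" "q = sqcls a" unfolding sq_carrier_eq by blast
  then have ca: "copy a" by simp
  obtain XA where XA: "XA \<subseteq> blk ` a" "large XA"
    and sub: "\<forall>Y. large (Y \<inter> XA) \<longrightarrow> (\<exists>s. copy s \<and> s \<subseteq> a \<and> s \<subseteq> FY Y)"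
    using main[OF ca] by blast
  have XAF: "XA \<subseteq> Field k" using XA(1) a blkF unfolding copy_def by blast
  have XP: "XA \<in> Pk_pre k" using XAF XA(2) unfolding Pk_pre_eq by blast
  have "cls XA \<in> Pk k" using XP Pk_eq by blast
  moreover have "\<forall>p'\<in>Pk k. Pk_le k p' (cls XA) \<longrightarrow> compat (sq_carrier Q (\<subseteq>)) (sq_le Q (\<subseteq>)) (fe p') q"
  proof (intro ballI impI)
    fix p' assume p': "p' \<in> Pk k" "Pk_le k p' (cls XA)"
    obtain X Y where XY: "X \<in> p'" "Y \<in> cls XA" "small (X - Y)" using p'(2) unfolding Pk_le_eq by blast
    note R = rep[OF p'(1)]
    have "small (rep p' - X)" using R XY(1) by blast
    then have "small (rep p' - Y)" using XY(3) by (rule small_tri)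
    moreover have "small (Y - XA)" using XY(2) unfolding cls_def by blast
    ultimately have sm: "small (rep p' - XA)" by (rule small_tri)
    have Rl: "large (rep p')" using R unfolding Pk_pre_eq by blast
    have "large (rep p' \<inter> XA)"
    proof (rule ccontr)
      assume "\<not> large (rep p' \<inter> XA)"
      then have "small ((rep p' - XA) \<union> (rep p' \<inter> XA))" using sm small_Un' large_small by blast
      then have "small (rep p')" by (rule small_sub[rotated]) blast
      then show False using Rl large_small by blast
    qed
    then obtain s where s: "copy s" "s \<subseteq> a" "s \<subseteq> FY (rep p')" using sub by blast
    have "compat (sq_carrier Q (\<subseteq>)) (sq_le Q (\<subseteq>)) (sqcls (FY (rep p'))) (sqcls a)"
      using sq_compat[OF FY_rep[OF p'(1)] a(1)] s by blast
    then show "compat (sq_carrier Q (\<subseteq>)) (sq_le Q (\<subseteq>)) (fe p') q" unfolding fe_def a(2) .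
  qed
  ultimately show "\<exists>p\<in>Pk k. \<forall>p'\<in>Pk k. Pk_le k p' p \<longrightarrow> compat (sq_carrier Q (\<subseteq>)) (sq_le Q (\<subseteq>)) (fe p') q"
    by blast
qed

end


lemma opow_refl: "f \<in> opow_carrier e \<Longrightarrow> (f,f) \<in> opow e"
  unfolding opow_def by simp

lemma Field_opow: "Field (opow e) = opow_carrier e"
proof
  show "Field (opow e) \<subseteq> opow_carrier e" unfolding Field_def opow_def by auto
  show "opow_carrier e \<subseteq> Field (opow e)" using opow_refl by (blast intro: FieldI1)
qed

lemma opow_mem: "(f,g) \<in> opow e \<longleftrightarrow> f \<in> opow_carrier e \<and> g \<in> opow_carrier e \<and>
      (f = g \<or> (\<exists>x. f x < g x \<and> (\<forall>y. f y \<noteq> g y \<longrightarrow> (y, x) \<in> e)))"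
  unfolding opow_def by simp

lemma carrier_zero: "f \<in> opow_carrier e \<Longrightarrow> x \<notin> Field e \<Longrightarrow> f x = 0"
  unfolding opow_carrier_def by blast

lemma carrier_fin: "f \<in> opow_carrier e \<Longrightarrow> finite {x. f x \<noteq> 0}"
  unfolding opow_carrier_def by blast

lemma fin_max:
  assumes W: "Well_order e" and "finite D" "D \<noteq> {}" "D \<subseteq> Field e"
  shows "\<exists>z\<in>D. \<forall>y\<in>D. (y,z) \<in> e"
  using assms(2-4)
proof (induction D rule: finite_ne_induct)
  case (singleton x) then show ?case using wo_refl[OF W] by auto
next
  case (insert x F)
  then obtain z where z: "z \<in> F" "\<forall>y\<in>F. (y,z) \<in> e" by auto
  have xF: "x \<in> Field e" "z \<in> Field e" using insert z by auto
  show ?case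
  proof (cases "(x,z) \<in> e")
    case True then show ?thesis using z by auto
  next
    case False
    then have "(z,x) \<in> e" using wo_total[OF W xF] by blast
    then have "\<forall>y\<in>insert x F. (y,x) \<in> e" using z wo_trans[OF W] wo_refl[OF W] xF by blast
    then show ?thesis by blast
  qed
qed

lemma opow_indec:
  assumes W: "Well_order e" and ne: "Field e \<noteq> {}" and WO: "Well_order (opow e)"
    and a: "a \<in> Field (opow e)"
  shows "(opow e, Restr (opow e) {z. (a,z) \<in> opow e \<and> z \<noteq> a}) \<in> ordLeq"
proof -
  let ?Fin = "{z. (a,z) \<in> opow e \<and> z \<noteq> a}"
  have aC: "a \<in> opow_carrier e" using a unfolding Field_opow .
  have suppa: "{w. a w \<noteq> 0} \<subseteq> Field e"
  proof
    fix w assume "w \<in> {w. a w \<noteq> 0}" then show "w \<in> Field e" using carrier_zero[OF aC, of w] by auto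
  qed
  obtain m where m: "m \<in> Field e" "\<forall>w. (m,w) \<in> e \<and> w \<noteq> m \<longrightarrow> a w = 0"
  proof (cases "{w. a w \<noteq> 0} = {}")
    case True
    then show ?thesis using that ne by blast
  next
    case False
    then obtain z where z: "z \<in> {w. a w \<noteq> 0}" "\<forall>y\<in>{w. a w \<noteq> 0}. (y,z) \<in> e"
      using fin_max[OF W carrier_fin[OF aC] _ suppa] by blast
    have "\<forall>w. (z,w) \<in> e \<and> w \<noteq> z \<longrightarrow> a w = 0"
      using z(2) wo_antisym[OF W] by blast
    then show ?thesis using that z(1) suppa by blast
  qed
  define \<phi> where "\<phi> x = (\<lambda>w. x w + (if w = m then Suc (a m) else 0))" for x :: "'a \<Rightarrow> nat"
  have \<phi>C: "\<phi> x \<in> opow_carrier e" if x: "x \<in> opow_carrier e" for x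
  proof -
    have "\<forall>w. w \<notin> Field e \<longrightarrow> \<phi> x w = 0" using carrier_zero[OF x] m(1) unfolding \<phi>_def by auto
    moreover have "finite {w. \<phi> x w \<noteq> 0}"
    proof -
      have "{w. \<phi> x w \<noteq> 0} \<subseteq> {w. x w \<noteq> 0} \<union> {m}" unfolding \<phi>_def by auto
      then show ?thesis using carrier_fin[OF x] finite_subset by blast
    qed
    ultimately show ?thesis unfolding opow_carrier_def by blast
  qed
  have \<phi>Fin: "\<phi> x \<in> ?Fin" if x: "x \<in> opow_carrier e" for x
  proof -
    let ?D = "{w. a w \<noteq> \<phi> x w}"
    have D1: "?D \<subseteq> Field e"
    proof
      fix w assume "w \<in> ?D" then show "w \<in> Field e"
        using carrier_zero[OF aC, of w] carrier_zero[OF \<phi>C[OF x], of w] by (cases "w \<in> Field e") auto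
    qed
    have "?D \<subseteq> {w. a w \<noteq> 0} \<union> {w. \<phi> x w \<noteq> 0}" by auto
    then have D2: "finite ?D" using carrier_fin[OF aC] carrier_fin[OF \<phi>C[OF x]] finite_subset by blast
    have mD: "m \<in> ?D" unfolding \<phi>_def by simp
    obtain z where z: "z \<in> ?D" "\<forall>y\<in>?D. (y,z) \<in> e" using fin_max[OF W D2 _ D1] mD by blast
    have "a z < \<phi> x z"
    proof (cases "z = m")
      case True then show ?thesis unfolding \<phi>_def by simp
    next
      case False
      then have "a z = 0" using m(2) z mD by blast
      then show ?thesis using z(1) by simp
    qed
    then have "(a, \<phi> x) \<in> opow e" unfolding opow_mem using aC \<phi>C[OF x] z(2) by blast
    moreover have "\<phi> x \<noteq> a" using mD by auto
    ultimately show ?thesis by blast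
  qed
  have "smono (opow e) (Restr (opow e) ?Fin) \<phi>"
    unfolding smono_def
  proof (intro conjI allI impI ballI)
    fix x assume "x \<in> Field (opow e)"
    then have x: "x \<in> opow_carrier e" unfolding Field_opow .
    have "(\<phi> x, \<phi> x) \<in> Restr (opow e) ?Fin" using opow_refl[OF \<phi>C[OF x]] \<phi>Fin[OF x] by blast
    then show "\<phi> x \<in> Field (Restr (opow e) ?Fin)" by (rule FieldI1)
  next
    fix x y assume xy: "(x,y) \<in> opow e" "x \<noteq> y"
    have xC: "x \<in> opow_carrier e" "y \<in> opow_carrier e" using xy(1) unfolding opow_mem by blast+
    obtain z where z: "x z < y z" "\<forall>w. x w \<noteq> y w \<longrightarrow> (w,z) \<in> e" using xy unfolding opow_mem by blast
    have "\<phi> x z < \<phi> y z" using z(1) unfolding \<phi>_def by simp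
    moreover have "\<forall>w. \<phi> x w \<noteq> \<phi> y w \<longrightarrow> (w,z) \<in> e" using z(2) unfolding \<phi>_def by simp
    ultimately have "(\<phi> x, \<phi> y) \<in> opow e" unfolding opow_mem using \<phi>C xC by blast
    then show "(\<phi> x, \<phi> y) \<in> Restr (opow e) ?Fin" using \<phi>Fin xC by blast
    show "\<phi> x \<noteq> \<phi> y" using `\<phi> x z < \<phi> y z` by auto
  qed
  then show ?thesis using smono_ordLeq[OF WO Well_order_Restr[OF WO]] by blast
qed

lemma smono_inj: "Well_order e \<Longrightarrow> smono e e' j \<Longrightarrow> inj_on j (Field e)"
  unfolding inj_on_def smono_def using wo_total by metis

lemma opow_mono:
  assumes W: "Well_order e" and W': "Well_order e'" and le: "(e, e') \<in> ordLeq"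
    and WO: "Well_order (opow e)" and WO': "Well_order (opow e')"
  shows "(opow e, opow e') \<in> ordLeq"
proof -
  obtain j where j: "smono e e' j" using ordLeq_smono[OF le] by blast
  have inj: "inj_on j (Field e)" using smono_inj[OF W j] .
  have jF: "j v \<in> Field e'" if "v \<in> Field e" for v using j that unfolding smono_def by blast
  define \<psi> where "\<psi> x = (\<lambda>w. if w \<in> j ` Field e then x (inv_into (Field e) j w) else 0)" for x :: "'a \<Rightarrow> nat"
  have \<psi>j: "\<psi> x (j v) = x v" if "v \<in> Field e" for x v
    unfolding \<psi>_def using that inj by simp
  have \<psi>C: "\<psi> x \<in> opow_carrier e'" if x: "x \<in> opow_carrier e" for x
  proof -
    have "\<forall>w. w \<notin> Field e' \<longrightarrow> \<psi> x w = 0" unfolding \<psi>_def using jF by auto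
    moreover have "{w. \<psi> x w \<noteq> 0} \<subseteq> j ` {w. x w \<noteq> 0}"
    proof
      fix w assume "w \<in> {w. \<psi> x w \<noteq> 0}"
      then obtain v where v: "v \<in> Field e" "w = j v" "x v \<noteq> 0" unfolding \<psi>_def using inj
        by (auto split: if_splits)
      then show "w \<in> j ` {w. x w \<noteq> 0}" by blast
    qed
    then have "finite {w. \<psi> x w \<noteq> 0}" using carrier_fin[OF x] finite_subset by blast
    ultimately show ?thesis unfolding opow_carrier_def by blast
  qed
  have "smono (opow e) (opow e') \<psi>"
    unfolding smono_def
  proof (intro conjI allI impI ballI)
    fix x assume "x \<in> Field (opow e)"
    then show "\<psi> x \<in> Field (opow e')" unfolding Field_opow using \<psi>C by blast
  next
    fix x y assume xy: "(x,y) \<in> opow e" "x \<noteq> y"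
    have xC: "x \<in> opow_carrier e" "y \<in> opow_carrier e" using xy(1) unfolding opow_mem by blast+
    obtain z where z: "x z < y z" "\<forall>w. x w \<noteq> y w \<longrightarrow> (w,z) \<in> e" using xy unfolding opow_mem by blast
    have zF: "z \<in> Field e" using z(1) carrier_zero[OF xC(2)] by (metis not_less0)
    have lt: "\<psi> x (j z) < \<psi> y (j z)" using z(1) \<psi>j zF by simp
    have "\<forall>w. \<psi> x w \<noteq> \<psi> y w \<longrightarrow> (w, j z) \<in> e'"
    proof (intro allI impI)
      fix w assume w: "\<psi> x w \<noteq> \<psi> y w"
      then obtain v where v: "v \<in> Field e" "w = j v" unfolding \<psi>_def by (auto split: if_splits)
      then have "x v \<noteq> y v" using w \<psi>j by simp
      then have "(v,z) \<in> e" using z(2) by blast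
      then show "(w, j z) \<in> e'"
      proof (cases "v = z")
        case True then show ?thesis using v wo_refl[OF W'] jF zF by simp
      next
        case False then show ?thesis using j `(v,z) \<in> e` v unfolding smono_def by blast
      qed
    qed
    then show "(\<psi> x, \<psi> y) \<in> opow e'" unfolding opow_mem using \<psi>C xC lt by blast
    show "\<psi> x \<noteq> \<psi> y" using lt by auto
  qed
  then show ?thesis using smono_ordLeq[OF WO WO'] by blast
qed


lemma osum_mem_g: "(((i,x),(j,y)) \<in> osum k B) = (i \<in> Field k \<and> j \<in> Field k \<and> x \<in> Field (B i) \<and>
   y \<in> Field (B j) \<and> ((i \<noteq> j \<and> (i,j) \<in> k) \<or> (i = j \<and> (x,y) \<in> B i)))"
  unfolding osum_def by (simp only: mem_Collect_eq prod.case)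

lemma block_WO:
  assumes WS: "Well_order (osum k B)" and xi: "\<xi> \<in> Field k"
  shows "Well_order (B \<xi>)"
proof -
  let ?R = "Restr (osum k B) ({\<xi>} \<times> UNIV)"
  have WR: "Well_order ?R" using Well_order_Restr[OF WS] .
  have inj: "inj_on snd (Field ?R)"
  proof (rule inj_onI)
    fix p q assume "p \<in> Field ?R" "q \<in> Field ?R" "snd p = snd q"
    moreover have "Field ?R \<subseteq> {\<xi>} \<times> UNIV" by (rule Field_Restr_subset)
    ultimately show "p = q" by (cases p, cases q) auto
  qed
  have eq: "dir_image ?R snd = B \<xi>"
  proof
    show "dir_image ?R snd \<subseteq> B \<xi>"
    proof
      fix pq assume "pq \<in> dir_image ?R snd"
      then obtain p q where pq: "pq = (snd p, snd q)" "(p,q) \<in> ?R" unfolding dir_image_def by blast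
      obtain x y where xy: "p = (\<xi>, x)" "q = (\<xi>, y)" using pq(2) by auto
      have "((\<xi>,x),(\<xi>,y)) \<in> osum k B" using pq(2) xy by simp
      then have "(x,y) \<in> B \<xi>" unfolding osum_mem_g by simp
      then show "pq \<in> B \<xi>" using pq xy by simp
    qed
  next
    show "B \<xi> \<subseteq> dir_image ?R snd"
    proof
      fix pq assume pq: "pq \<in> B \<xi>"
      obtain x y where xy: "pq = (x,y)" by (cases pq)
      have "x \<in> Field (B \<xi>)" "y \<in> Field (B \<xi>)" using pq xy by (auto intro: FieldI1 FieldI2)
      then have "((\<xi>,x),(\<xi>,y)) \<in> osum k B" unfolding osum_mem_g using xi pq xy by simp
      then have "((\<xi>,x),(\<xi>,y)) \<in> ?R" by simp
      then show "pq \<in> dir_image ?R snd" unfolding dir_image_def using xy by force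
    qed
  qed
  show ?thesis using Well_order_dir_image[OF WR inj] eq by simp
qed

theorem mainTheorem8:
  fixes d :: "'a rel" and k :: "'k rel" and ds :: "'k \<Rightarrow> 'b rel"
  assumes "Well_order d"
    and "Card_order k"
    and "(natLeq, k) \<in> ordLeq"
    and "cof_eq (opow d) k"
    and "\<forall>\<xi> \<in> Field k. Well_order (ds \<xi>)"
    and "\<forall>\<xi> \<in> Field k. \<forall>\<zeta> \<in> Field k. \<xi> \<noteq> \<zeta> \<and> (\<xi>, \<zeta>) \<in> k \<longrightarrow> (ds \<xi>, ds \<zeta>) \<in> ordLeq"
    and "\<forall>\<xi> \<in> Field k. cof_ge (opow (ds \<xi>)) k"
    and "(opow d, osum k (\<lambda>\<xi>. opow (ds \<xi>))) \<in> ordIso"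
  shows "\<exists>f. complete_embedding (Pk k) (Pk_le k)
              (sq_carrier (Pord d) (\<subseteq>)) (sq_le (Pord d) (\<subseteq>)) f"
proof -
  note A = assms
  let ?B = "\<lambda>\<xi>. opow (ds \<xi>)"
  obtain h where h: "iso (opow d) (osum k ?B) h" and WW: "Well_order (opow d)"
    and WS: "Well_order (osum k ?B)"
    using A(8) unfolding ordIso_def by blast
  have WOB: "\<forall>\<xi>\<in>Field k. Well_order (?B \<xi>)" using block_WO[OF WS] by blast
  have cofW: "cof_ge (opow d) k" using A(4) unfolding cof_eq_def by blast
  have ne: "Field (ds \<xi>) \<noteq> {}" if xi: "\<xi> \<in> Field k" for \<xi>
  proof
    assume e: "Field (ds \<xi>) = {}"
    have "Field (opow (ds \<xi>)) \<subseteq> {(\<lambda>_. 0)}"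
    proof
      fix f assume "f \<in> Field (opow (ds \<xi>))"
      then have f: "f \<in> opow_carrier (ds \<xi>)" unfolding Field_opow .
      have "\<forall>x. f x = 0" using carrier_zero[OF f] e by blast
      then show "f \<in> {(\<lambda>_. 0)}" by auto
    qed
    then have fin: "finite (Field (opow (ds \<xi>)))" using finite_subset by blast
    have "cofinal (opow (ds \<xi>)) (Field (opow (ds \<xi>)))"
      unfolding cofinal_def using wo_refl[OF WOB[rule_format, OF xi]] by blast
    then have "(k, card_of (Field (opow (ds \<xi>)))) \<in> ordLeq" using A(7) xi unfolding cof_ge_def by blast
    moreover have "(card_of (Field (opow (ds \<xi>))), k) \<in> ordLess" using small_finite[OF A(2) A(3) fin] .
    ultimately show False using not_ordLess_ordLeq by blast
  qed
  have monoB: "\<forall>\<xi>\<in>Field k. \<forall>\<zeta>\<in>Field k. (\<xi>,\<zeta>) \<in> k \<longrightarrow> (?B \<xi>, ?B \<zeta>) \<in> ordLeq"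
  proof (intro ballI impI)
    fix \<xi> \<zeta> assume x: "\<xi> \<in> Field k" "\<zeta> \<in> Field k" "(\<xi>,\<zeta>) \<in> k"
    show "(?B \<xi>, ?B \<zeta>) \<in> ordLeq"
    proof (cases "\<xi> = \<zeta>")
      case True
      have "Well_order (?B \<zeta>)" using WOB x(2) by blast
      then show ?thesis using True ordLeq_reflexive by metis
    next
      case False
      then have "(ds \<xi>, ds \<zeta>) \<in> ordLeq" using A(6) x by blast
      then show ?thesis using opow_mono A(5) WOB x by blast
    qed
  qed
  have indec: "\<forall>\<xi>\<in>Field k. \<forall>y\<in>Field (?B \<xi>). (?B \<xi>, Restr (?B \<xi>) {z. (y,z) \<in> ?B \<xi> \<and> z \<noteq> y}) \<in> ordLeq"
    using opow_indec A(5) ne WOB by blast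
  interpret blocks "opow d" k ?B h
    by (unfold_locales; fact A(2) A(3) WW h WOB cofW A(7) monoB indec)
  have Q: "Pord d = {A. copy A}" unfolding Pord_def copy_def by simp
  show ?thesis unfolding Q using embedding by blast
qed


end
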